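(* Let $\vec{G}$ be a DDMOG on $n$ vertices with $imb(\vec{G})=0$, with a DDM labeling $g$, and index its vertices $v_1,\dots,v_n$ so that $g(v_i)=i$. Let $\vec{H}$ be an oriented graph on $m$ vertices, vertex-disjoint from $\vec{G}$, with a bijective labeling $h:V(\vec{H})\to\{1,2,\dots,m\}$ such that every vertex $v\in V(\vec{H})$ satisfies either $m+1\le|wt_h(v)|\le m+n$ or $wt_h(v)=0$, and such that $\sum_{v\in V_h^{i+m}(\vec{H})}h(v)=\sum_{v\in V_h^{-i-m}(\vec{H})}h(v)$ for each $1\le i\le n$. Then the weighted sum $\vec{G}\oplus_{wt_h}^m\vec{H}$ is a DDMOG on $n+m$ vertices.
   Context: An oriented graph is a finite digraph without loops such that whenever $(u,v)$ is an arc, $(v,u)$ is not. For a vertex $v$, $N^+(v)=\{x:(x,v)\text{ is an arc}\}$, $N^-(v)=\{x:(v,x)\text{ is an arc}\}$, $imb(v)=|N^+(v)|-|N^-(v)|$ and $imb(\vec{G})=\max_v|imb(v)|$. For a labeling $f$, $wt_f(v)=\sum_{x\in N^+(v)}f(x)-\sum_{x\in N^-(v)}f(x)$. A DDM labeling of an oriented graph on $n$ vertices is a bijection $f:V\to\{1,\dots,n\}$ with $wt_f(v)=0$ for all $v$; a DDMOG is an oriented graph admitting one. For an oriented graph $\vec{H}$ with labeling $h$ and integer $j$, $V_h^{j}(\vec{H})=\{u:wt_h(u)=j\}$. Weighted sum: let $\vec{G}$ have vertices $v_1,\dots,v_n$ (indexed by a labeling $g$ with $g(v_i)=i$), $s\in\mathbb{Z}$,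 and $\vec{H}$ (vertex-disjoint from $\vec{G}$) have a labeling $h:V(\vec{H})\to\mathbb{Z}^+$ with $\{|wt_h(u)|:u\in V(\vec{H})\}\subseteq\{0\}\cup\{i+s:1\le i\le n\}$; then $\vec{G}\oplus_{wt_h}^s\vec{H}$ has vertex set $V(\vec{G})\cup V(\vec{H})$ and arc set $E(\vec{G})\cup E(\vec{H})\cup\bigcup_{i=1}^n(E^i\cup E^{-i})$, where $E^i=\{(v_i,u):u\in V_h^{-i-s}(\vec{H})\}$ and $E^{-i}=\{(u,v_i):u\in V_h^{i+s}(\vec{H})\}$. *)

theory Defs
  imports Main
begin

definition oriented_graph :: "'a set \<Rightarrow> ('a \<times> 'a) set \<Rightarrow> bool" where
  "oriented_graph V E \<longleftrightarrow> finite V \<and> E \<subseteq> V \<times> V \<and>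
     (\<forall>u v. (u, v) \<in> E \<longrightarrow> u \<noteq> v \<and> (v, u) \<notin> E)"

definition in_nbrs :: "('a \<times> 'a) set \<Rightarrow> 'a \<Rightarrow> 'a set" where
  "in_nbrs E v = {x. (x, v) \<in> E}"

definition out_nbrs :: "('a \<times> 'a) set \<Rightarrow> 'a \<Rightarrow> 'a set" where
  "out_nbrs E v = {x. (v, x) \<in> E}"

definition imb :: "('a \<times> 'a) set \<Rightarrow> 'a \<Rightarrow> int" where
  "imb E v = int (card (in_nbrs E v)) - int (card (out_nbrs E v))"

definition graph_imb :: "'a set \<Rightarrow> ('a \<times> 'a) set \<Rightarrow> int" where
  "graph_imb V E = (if V = {} then 0 else Max ((\<lambda>v. \<bar>imb E v\<bar>) ` V))"

definition wt :: "('a \<times> 'a) set \<Rightarrow> ('a \<Rightarrow> int) \<Rightarrow> 'a \<Rightarrow> int" where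
  "wt E f v = (\<Sum>x\<in>in_nbrs E v. f x) - (\<Sum>x\<in>out_nbrs E v. f x)"

definition DDM_labeling :: "'a set \<Rightarrow> ('a \<times> 'a) set \<Rightarrow> ('a \<Rightarrow> int) \<Rightarrow> bool" where
  "DDM_labeling V E f \<longleftrightarrow> bij_betw f V {1..int (card V)} \<and> (\<forall>v\<in>V. wt E f v = 0)"

definition DDMOG :: "'a set \<Rightarrow> ('a \<times> 'a) set \<Rightarrow> bool" where
  "DDMOG V E \<longleftrightarrow> oriented_graph V E \<and> (\<exists>f. DDM_labeling V E f)"

definition Vlevel :: "'a set \<Rightarrow> ('a \<times> 'a) set \<Rightarrow> ('a \<Rightarrow> int) \<Rightarrow> int \<Rightarrow> 'a set" where
  "Vlevel V E h j = {u \<in> V. wt E h u = j}"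

text \<open>Weighted sum G \<oplus>^s_{wt_h} H; the vertex v_i of G is the one with g(v_i) = i.
  E^i = {(v_i,u). u \<in> V_h^{-i-s}},  E^{-i} = {(u,v_i). u \<in> V_h^{i+s}}.\<close>
definition wsum_arcs :: "'a set \<Rightarrow> ('a \<times> 'a) set \<Rightarrow> ('a \<Rightarrow> int) \<Rightarrow> int \<Rightarrow>
    'a set \<Rightarrow> ('a \<times> 'a) set \<Rightarrow> ('a \<Rightarrow> int) \<Rightarrow> ('a \<times> 'a) set" where
  "wsum_arcs VG EG g s VH EH h =
     EG \<union> EH
     \<union> {(v, u). v \<in> VG \<and> 1 \<le> g v \<and> g v \<le> int (card VG) \<and> u \<in> Vlevel VH EH h (- g v - s)}
     \<union> {(u, v). v \<in> VG \<and> 1 \<le> g v \<and> g v \<le> int (card VG) \<and> u \<in> Vlevel VH EH h (g v + s)}"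

end

theory Submission
  imports Defs
begin

lemma single_level:
  assumes bij: "bij_betw g VG {1..int n}" and c: "1 \<le> c" "c \<le> int n"
  shows "\<exists>v0\<in>VG. {v \<in> VG. g v = c} = {v0} \<and> g v0 = c"
proof -
  obtain v0 where v0: "v0 \<in> VG" "g v0 = c" using bij c
    by (metis atLeastAtMost_iff bij_betw_iff_bijections)
  have "{v \<in> VG. g v = c} = {v0}" using v0 bij
    by (auto simp: bij_betw_def inj_on_def)
  thus ?thesis using v0 by blast
qed

theorem theorem7:
  fixes VG VH :: "'a set" and EG EH :: "('a \<times> 'a) set"
    and g h :: "'a \<Rightarrow> int" and n m :: nat
  assumes "DDMOG VG EG"
    and "DDM_labeling VG EG g"
    and "card VG = n"
    and "graph_imb VG EG = 0"
    and "oriented_graph VH EH"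
    and "card VH = m"
    and "VG \<inter> VH = {}"
    and "bij_betw h VH {1..int m}"
    and "\<forall>v\<in>VH. (int m + 1 \<le> \<bar>wt EH h v\<bar> \<and> \<bar>wt EH h v\<bar> \<le> int m + int n) \<or> wt EH h v = 0"
    and "\<forall>i::int. 1 \<le> i \<and> i \<le> int n \<longrightarrow>
           (\<Sum>v\<in>Vlevel VH EH h (i + int m). h v) = (\<Sum>v\<in>Vlevel VH EH h (- i - int m). h v)"
  shows "DDMOG (VG \<union> VH) (wsum_arcs VG EG g (int m) VH EH h)
         \<and> card (VG \<union> VH) = n + m"
proof -
  note A = assms
  have ogG: "oriented_graph VG EG" using A(1) by (simp add: DDMOG_def)
  have finG: "finite VG" and EGs: "EG \<subseteq> VG \<times> VG"
    and orG: "\<And>u v. (u, v) \<in> EG \<Longrightarrow> u \<noteq> v \<and> (v, u) \<notin> EG"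
    using ogG by (auto simp: oriented_graph_def)
  have finH: "finite VH" and EHs: "EH \<subseteq> VH \<times> VH"
    and orH: "\<And>u v. (u, v) \<in> EH \<Longrightarrow> u \<noteq> v \<and> (v, u) \<notin> EH"
    using A(5) by (auto simp: oriented_graph_def)
  have bijg: "bij_betw g VG {1..int n}" using A(2,3) by (simp add: DDM_labeling_def)
  have wtg: "\<And>v. v \<in> VG \<Longrightarrow> wt EG g v = 0" using A(2) by (simp add: DDM_labeling_def)
  have grng: "\<And>v. v \<in> VG \<Longrightarrow> 1 \<le> g v \<and> g v \<le> int n"
    using bijg by (auto simp: bij_betw_def)
  have grng': "\<And>v. v \<in> VG \<Longrightarrow> 1 \<le> g v \<and> g v \<le> int (card VG)"
    using grng A(3) by auto
  have imb0: "\<And>v. v \<in> VG \<Longrightarrow> imb EG v = 0"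
  proof -
    fix v assume v: "v \<in> VG"
    hence "\<bar>imb EG v\<bar> \<le> Max ((\<lambda>v. \<bar>imb EG v\<bar>) ` VG)" using finG by (intro Max_ge) auto
    thus "imb EG v = 0" using A(4) v by (auto simp: graph_imb_def split: if_splits)
  qed
  have card: "card (VG \<union> VH) = n + m" using A(3,6,7) finG finH by (simp add: card_Un_disjoint)
  define E' where "E' = wsum_arcs VG EG g (int m) VH EH h"
  define f where "f = (\<lambda>x. if x \<in> VG then g x + int m else h x)"
  have og: "oriented_graph (VG \<union> VH) E'"
    unfolding oriented_graph_def E'_def wsum_arcs_def Vlevel_def
    using finG finH EGs EHs orG orH A(7) grng
    by (auto; fastforce)
  have bijf: "bij_betw f (VG \<union> VH) {1..int (card (VG \<union> VH))}"
  proof -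
    have b1: "bij_betw (\<lambda>x. g x + int m) VG {int m + 1..int m + int n}"
    proof -
      have "bij_betw (\<lambda>x. x + int m) {1..int n} {int m + 1..int m + int n}"
        unfolding bij_betw_def inj_on_def
        by (auto simp: image_iff intro!: bexI[where x="_ - int m"])
      from bij_betw_trans[OF bijg this] show ?thesis by (simp add: comp_def)
    qed
    have b1': "bij_betw f VG {int m + 1..int m + int n}"
      using b1 by (rule bij_betw_cong[THEN iffD1, rotated]) (simp add: f_def)
    have b2': "bij_betw f VH {1..int m}"
      using A(8) by (rule bij_betw_cong[THEN iffD1, rotated]) (use A(7) in \<open>auto simp: f_def\<close>)
    have "bij_betw f (VG \<union> VH) ({int m + 1..int m + int n} \<union> {1..int m})"
      by (rule bij_betw_combine[OF b1' b2']) auto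
    moreover have "{int m + 1..int m + int n} \<union> {1..int m} = {1..int (card (VG \<union> VH))}"
      using card by auto
    ultimately show ?thesis by simp
  qed
  have wt0: "wt E' f x = 0" if x: "x \<in> VG \<union> VH" for x
  proof (cases "x \<in> VG")
    case True
    have xH: "x \<notin> VH" using True A(7) by blast
    have inE: "in_nbrs E' x = in_nbrs EG x \<union> Vlevel VH EH h (g x + int m)"
      unfolding E'_def wsum_arcs_def in_nbrs_def Vlevel_def
      using True xH EHs grng'[OF True] by auto
    have outE: "out_nbrs E' x = out_nbrs EG x \<union> Vlevel VH EH h (- g x - int m)"
      unfolding E'_def wsum_arcs_def out_nbrs_def Vlevel_def
      using True xH EHs grng'[OF True] by auto
    have inG: "in_nbrs EG x \<subseteq> VG" "out_nbrs EG x \<subseteq> VG"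
      using EGs by (auto simp: in_nbrs_def out_nbrs_def)
    have lv: "Vlevel VH EH h j \<subseteq> VH" for j by (auto simp: Vlevel_def)
    have fin1: "finite (in_nbrs EG x)" "finite (out_nbrs EG x)"
      using inG finG finite_subset by blast+
    have fin2: "finite (Vlevel VH EH h j)" for j using lv finH finite_subset by blast
    have dis: "in_nbrs EG x \<inter> Vlevel VH EH h j = {}" "out_nbrs EG x \<inter> Vlevel VH EH h j = {}" for j
      using inG lv A(7) by blast+
    have s1: "(\<Sum>y\<in>in_nbrs E' x. f y) = (\<Sum>y\<in>in_nbrs EG x. g y) + int m * int (card (in_nbrs EG x))
              + (\<Sum>y\<in>Vlevel VH EH h (g x + int m). h y)"
    proof -
      have "(\<Sum>y\<in>in_nbrs E' x. f y) = (\<Sum>y\<in>in_nbrs EG x. f y) + (\<Sum>y\<in>Vlevel VH EH h (g x + int m). f y)"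
        unfolding inE by (rule sum.union_disjoint[OF fin1(1) fin2 dis(1)])
      also have "(\<Sum>y\<in>in_nbrs EG x. f y) = (\<Sum>y\<in>in_nbrs EG x. g y + int m)"
        using inG by (intro sum.cong) (auto simp: f_def)
      also have "(\<Sum>y\<in>Vlevel VH EH h (g x + int m). f y) = (\<Sum>y\<in>Vlevel VH EH h (g x + int m). h y)"
        using lv A(7) by (intro sum.cong) (auto simp: f_def)
      finally show ?thesis by (simp add: sum.distrib mult.commute)
    qed
    have s2: "(\<Sum>y\<in>out_nbrs E' x. f y) = (\<Sum>y\<in>out_nbrs EG x. g y) + int m * int (card (out_nbrs EG x))
              + (\<Sum>y\<in>Vlevel VH EH h (- g x - int m). h y)"
    proof -
      have "(\<Sum>y\<in>out_nbrs E' x. f y) = (\<Sum>y\<in>out_nbrs EG x. f y) + (\<Sum>y\<in>Vlevel VH EH h (- g x - int m). f y)"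
        unfolding outE by (rule sum.union_disjoint[OF fin1(2) fin2 dis(2)])
      also have "(\<Sum>y\<in>out_nbrs EG x. f y) = (\<Sum>y\<in>out_nbrs EG x. g y + int m)"
        using inG by (intro sum.cong) (auto simp: f_def)
      also have "(\<Sum>y\<in>Vlevel VH EH h (- g x - int m). f y) = (\<Sum>y\<in>Vlevel VH EH h (- g x - int m). h y)"
        using lv A(7) by (intro sum.cong) (auto simp: f_def)
      finally show ?thesis by (simp add: sum.distrib mult.commute)
    qed
    have "int (card (in_nbrs EG x)) = int (card (out_nbrs EG x))"
      using imb0[OF True] by (simp add: imb_def)
    moreover have "(\<Sum>y\<in>in_nbrs EG x. g y) = (\<Sum>y\<in>out_nbrs EG x. g y)"
      using wtg[OF True] by (simp add: wt_def)
    moreover have "(\<Sum>v\<in>Vlevel VH EH h (g x + int m). h v) = (\<Sum>v\<in>Vlevel VH EH h (- g x - int m). h v)"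
      using A(10) grng[OF True] by blast
    ultimately show ?thesis unfolding wt_def s1 s2 by simp
  next
    case False
    hence xH: "x \<in> VH" using x by blast
    define w where "w = wt EH h x"
    have inE: "in_nbrs E' x = in_nbrs EH x \<union> {v \<in> VG. w = - g v - int m}"
      unfolding E'_def wsum_arcs_def in_nbrs_def Vlevel_def w_def
      using False xH EGs grng' by auto
    have outE: "out_nbrs E' x = out_nbrs EH x \<union> {v \<in> VG. w = g v + int m}"
      unfolding E'_def wsum_arcs_def out_nbrs_def Vlevel_def w_def
      using False xH EGs grng' by auto
    have inH: "in_nbrs EH x \<subseteq> VH" "out_nbrs EH x \<subseteq> VH"
      using EHs by (auto simp: in_nbrs_def out_nbrs_def)
    have fin1: "finite (in_nbrs EH x)" "finite (out_nbrs EH x)"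
      using inH finH finite_subset by blast+
    have fin2: "finite {v \<in> VG. P v}" for P using finG by simp
    have dis: "in_nbrs EH x \<inter> {v \<in> VG. P v} = {}" "out_nbrs EH x \<inter> {v \<in> VG. P v} = {}" for P
      using inH A(7) by blast+
    have s1: "(\<Sum>y\<in>in_nbrs E' x. f y) = (\<Sum>y\<in>in_nbrs EH x. h y) + (\<Sum>y\<in>{v \<in> VG. w = - g v - int m}. g y + int m)"
    proof -
      have "(\<Sum>y\<in>in_nbrs E' x. f y) = (\<Sum>y\<in>in_nbrs EH x. f y) + (\<Sum>y\<in>{v \<in> VG. w = - g v - int m}. f y)"
        unfolding inE by (rule sum.union_disjoint[OF fin1(1) fin2 dis(1)])
      also have "(\<Sum>y\<in>in_nbrs EH x. f y) = (\<Sum>y\<in>in_nbrs EH x. h y)"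
        using inH A(7) by (intro sum.cong) (auto simp: f_def)
      also have "(\<Sum>y\<in>{v \<in> VG. w = - g v - int m}. f y) = (\<Sum>y\<in>{v \<in> VG. w = - g v - int m}. g y + int m)"
        by (intro sum.cong) (auto simp: f_def)
      finally show ?thesis .
    qed
    have s2: "(\<Sum>y\<in>out_nbrs E' x. f y) = (\<Sum>y\<in>out_nbrs EH x. h y) + (\<Sum>y\<in>{v \<in> VG. w = g v + int m}. g y + int m)"
    proof -
      have "(\<Sum>y\<in>out_nbrs E' x. f y) = (\<Sum>y\<in>out_nbrs EH x. f y) + (\<Sum>y\<in>{v \<in> VG. w = g v + int m}. f y)"
        unfolding outE by (rule sum.union_disjoint[OF fin1(2) fin2 dis(2)])
      also have "(\<Sum>y\<in>out_nbrs EH x. f y) = (\<Sum>y\<in>out_nbrs EH x. h y)"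
        using inH A(7) by (intro sum.cong) (auto simp: f_def)
      also have "(\<Sum>y\<in>{v \<in> VG. w = g v + int m}. f y) = (\<Sum>y\<in>{v \<in> VG. w = g v + int m}. g y + int m)"
        by (intro sum.cong) (auto simp: f_def)
      finally show ?thesis .
    qed
    have key: "(\<Sum>y\<in>{v \<in> VG. w = - g v - int m}. g y + int m) - (\<Sum>y\<in>{v \<in> VG. w = g v + int m}. g y + int m) = - w"
    proof -
      have wc: "(int m + 1 \<le> \<bar>w\<bar> \<and> \<bar>w\<bar> \<le> int m + int n) \<or> w = 0" using A(9) xH w_def by blast
      consider "w = 0" | "w > 0" "int m + 1 \<le> w" "w \<le> int m + int n"
        | "w < 0" "int m + 1 \<le> - w" "- w \<le> int m + int n" using wc by linarith
      thus ?thesis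
      proof cases
        case 1
        have "{v \<in> VG. w = - g v - int m} = {}" "{v \<in> VG. w = g v + int m} = {}"
          using 1 grng by force+
        thus ?thesis using 1 by (simp only: sum.empty)
      next
        case 2
        have e1: "{v \<in> VG. w = - g v - int m} = {}" using 2 grng by force
        obtain v0 where "v0 \<in> VG" "{v \<in> VG. g v = w - int m} = {v0}" "g v0 = w - int m"
          using single_level[OF bijg, of "w - int m"] 2 by auto
        moreover have "{v \<in> VG. w = g v + int m} = {v \<in> VG. g v = w - int m}" by auto
        ultimately show ?thesis unfolding e1 by simp
      next
        case 3
        have e1: "{v \<in> VG. w = g v + int m} = {}" using 3 grng by force
        obtain v0 where "v0 \<in> VG" "{v \<in> VG. g v = - w - int m} = {v0}" "g v0 = - w - int m"
          using single_level[OF bijg, of "- w - int m"] 3 by auto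
        moreover have "{v \<in> VG. w = - g v - int m} = {v \<in> VG. g v = - w - int m}" by auto
        ultimately show ?thesis unfolding e1 by simp
      qed
    qed
    show ?thesis unfolding wt_def s1 s2 using key by (simp add: w_def wt_def)
  qed
  have "DDM_labeling (VG \<union> VH) E' f"
    unfolding DDM_labeling_def using bijf wt0 by blast
  thus ?thesis using og card unfolding DDMOG_def E'_def by blast
qed

end
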